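(* Let $s\in\mathbb{R}$ and let $f:\mathbb{R}^n\to(-\infty,\infty]$ be lsc and variationally $s$-convex at $\bar x\in\operatorname{dom}f$ for $\bar x^*\in\partial f(\bar x)$. Then for every $t\in\mathbb{R}$ and every $y^*\in\mathbb{R}^n$ the function $\psi:=f+\langle y^*,\cdot-\bar x\rangle+\frac t2\|\cdot-\bar x\|^2$ is variationally $(s+t)$-convex at $\bar x$ for $\bar x^*+y^*$. Moreover, if $\widehat f$, $U$, $V$, $\rho$ are an lsc function, open convex neighborhood and number certifying variational $s$-convexity of $f$ at $\bar x$ for $\bar x^*$ (as in the definition), then variational $(s+t)$-convexity of $\psi$ at $\bar x$ for $\bar x^*+y^*$ can be certified by the function $\widehat\psi:=\widehat f+\langle y^*,\cdot-\bar x\rangle+\frac t2\|\cdot-\bar x\|^2$ together with a suitable open convex neighborhood $\widehat U\times\widehat V$ of $(\bar x,\bar x^*+y^* )$ and some $\widehat\rho>\psi(\bar x)=f(\bar x)$.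
   Context: Limiting subdifferential $\partial f(x)$: all $x^*$ with $x_k\to x$, $f(x_k)\to f(x)$, $x_k^*\to x^*$, $x_k^*\in\widehat\partial f(x_k)$, where $\widehat\partial f(x)=\{x^*\mid\liminf_{y\to x}\frac{f(y)-f(x)-\langle x^*,y-x\rangle}{\|y-x\|}\ge0\}$. $\operatorname{gph}_\rho\partial f=\{(x,x^* )\in\operatorname{gph}\partial f\mid f(x)<\rho\}$. An lsc function $f$ is variationally $s$-convex at $\bar x\in\operatorname{dom}f$ for $\bar x^*\in\partial f(\bar x)$ if there exist an open convex neighborhood $U\times V$ of $(\bar x,\bar x^* )$, an lsc function $\widehat f$ and $\rho>f(\bar x)$ such that $\widehat f-\frac s2\|\cdot\|^2$ is convex on $U$, $\widehat f\le f$ on $U$, $\operatorname{gph}_\rho\partial f\cap(U\times V)=\operatorname{gph}\partial\widehat f\cap(U\times V)$ and $f(x)=\widehat f(x)$ at the common elements $(x,x^* )$; such $\widehat f,U,V,\rho$ are said to certify the property. *)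

theory Defs
  imports "HOL-Analysis.Analysis" "HOL-Library.Extended_Real"
begin

definition lsc :: "('a::euclidean_space \<Rightarrow> ereal) \<Rightarrow> bool" where
  "lsc f \<longleftrightarrow> (\<forall>x. f x \<le> Liminf (at x) f)"

definition dom_fn :: "('a::euclidean_space \<Rightarrow> ereal) \<Rightarrow> 'a set" where
  "dom_fn f = {x. f x < \<infinity>}"

definition ereal_convex_on :: "'a::euclidean_space set \<Rightarrow> ('a \<Rightarrow> ereal) \<Rightarrow> bool" where
  "ereal_convex_on U g \<longleftrightarrow>
     (\<forall>x\<in>U. \<forall>y\<in>U. \<forall>l::real. 0 \<le> l \<and> l \<le> 1 \<longrightarrow>
        g (l *\<^sub>R x + (1 - l) *\<^sub>R y) \<le> ereal l * g x + ereal (1 - l) * g y)"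

definition regular_subdiff :: "('a::euclidean_space \<Rightarrow> ereal) \<Rightarrow> 'a \<Rightarrow> 'a set" where
  "regular_subdiff f x =
     (if \<bar>f x\<bar> = \<infinity> then {} else
      {xs. Liminf (at x) (\<lambda>y. (f y - f x - ereal (inner xs (y - x))) / ereal (norm (y - x))) \<ge> 0})"

definition limiting_subdiff :: "('a::euclidean_space \<Rightarrow> ereal) \<Rightarrow> 'a \<Rightarrow> 'a set" where
  "limiting_subdiff f x =
     (if \<bar>f x\<bar> = \<infinity> then {} else
      {xs. \<exists>xk xsk. xk \<longlonglongrightarrow> x \<and> (\<lambda>k. f (xk k)) \<longlonglongrightarrow> f x \<and> xsk \<longlonglongrightarrow> xs \<and>
                   (\<forall>k. xsk k \<in> regular_subdiff f (xk k))})"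

definition gph_subdiff :: "('a::euclidean_space \<Rightarrow> ereal) \<Rightarrow> ('a \<times> 'a) set" where
  "gph_subdiff f = {(x, xs). xs \<in> limiting_subdiff f x}"

definition gph_rho_subdiff :: "('a::euclidean_space \<Rightarrow> ereal) \<Rightarrow> real \<Rightarrow> ('a \<times> 'a) set" where
  "gph_rho_subdiff f \<rho> = {(x, xs). xs \<in> limiting_subdiff f x \<and> f x < ereal \<rho>}"

definition certifies_var_convex ::
  "real \<Rightarrow> ('a::euclidean_space \<Rightarrow> ereal) \<Rightarrow> 'a \<Rightarrow> 'a \<Rightarrow> ('a \<Rightarrow> ereal) \<Rightarrow> 'a set \<Rightarrow> 'a set \<Rightarrow> real \<Rightarrow> bool" where
  "certifies_var_convex s f xb xbs fh U V \<rho> \<longleftrightarrow>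
     open U \<and> convex U \<and> open V \<and> convex V \<and> xb \<in> U \<and> xbs \<in> V \<and>
     lsc fh \<and> (\<forall>x. fh x \<noteq> -\<infinity>) \<and>
     ereal_convex_on U (\<lambda>x. fh x - ereal (s / 2 * (norm x)\<^sup>2)) \<and>
     (\<forall>x\<in>U. fh x \<le> f x) \<and>
     ereal \<rho> > f xb \<and>
     gph_rho_subdiff f \<rho> \<inter> (U \<times> V) = gph_subdiff fh \<inter> (U \<times> V) \<and>
     (\<forall>(x, xs) \<in> gph_rho_subdiff f \<rho> \<inter> (U \<times> V). f x = fh x)"

definition var_convex :: "real \<Rightarrow> ('a::euclidean_space \<Rightarrow> ereal) \<Rightarrow> 'a \<Rightarrow> 'a \<Rightarrow> bool" where
  "var_convex s f xb xbs \<longleftrightarrow>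
     lsc f \<and> xb \<in> dom_fn f \<and> xbs \<in> limiting_subdiff f xb \<and>
     (\<exists>fh U V \<rho>. certifies_var_convex s f xb xbs fh U V \<rho>)"

end

theory Submission
  imports Defs
begin


definition qf :: "'a::euclidean_space \<Rightarrow> 'a \<Rightarrow> real \<Rightarrow> 'a \<Rightarrow> real" where
  "qf a b q y = inner a (y - b) + q / 2 * (norm (y - b))\<^sup>2"

definition qg :: "'a::euclidean_space \<Rightarrow> 'a \<Rightarrow> real \<Rightarrow> 'a \<Rightarrow> 'a" where
  "qg a b q y = a + q *\<^sub>R (y - b)"

lemma norm_diff_sq: "(norm (u - w))\<^sup>2 = (norm u)\<^sup>2 - 2 * inner w u + (norm (w::'a::real_inner))\<^sup>2"
  by (simp add: power2_norm_eq_inner inner_diff inner_commute)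

lemma qf_ident: "qf a b q y - qf a b q x - inner (qg a b q x) (y - x) = q / 2 * (norm (y - x))\<^sup>2"
proof -
  have "y - x = (y - b) - (x - b)" by simp
  then show ?thesis unfolding qf_def qg_def
    by (simp add: power2_norm_eq_inner inner_diff inner_add inner_commute algebra_simps)
qed

lemma qf_cont: "continuous_on UNIV (qf a b q)"
  unfolding qf_def by (intro continuous_intros)

lemma qf_tendsto: "(xk \<longlongrightarrow> x) F \<Longrightarrow> ((\<lambda>k. qf a b q (xk k)) \<longlongrightarrow> qf a b q x) F"
  unfolding qf_def by (intro tendsto_intros)

lemma qg_tendsto: "(xk \<longlongrightarrow> x) F \<Longrightarrow> ((\<lambda>k. qg a b q (xk k)) \<longlongrightarrow> qg a b q x) F"
  unfolding qg_def by (intro tendsto_intros)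

lemma liminf_pert:
  fixes G :: "'b \<Rightarrow> ereal" and k :: "'b \<Rightarrow> real"
  assumes G: "\<forall>c<0. eventually (\<lambda>y. c < G y) F" and k: "(k \<longlongrightarrow> 0) F"
  shows "\<forall>c<0. eventually (\<lambda>y. c < G y + ereal (k y)) F"
proof (intro allI impI)
  fix c :: ereal assume c: "c < 0"
  show "eventually (\<lambda>y. c < G y + ereal (k y)) F"
  proof (cases c)
    case MInf
    have "eventually (\<lambda>y. -\<infinity> < G y) F" using G[rule_format, of "-\<infinity>"] by simp
    then show ?thesis by eventually_elim (use MInf in auto)
  next
    case PInf then show ?thesis using c by simp
  next
    case (real r)
    with c have r: "r < 0" by simp
    have e1: "eventually (\<lambda>y. ereal (r/2) < G y) F" using G r by auto
    have e2: "eventually (\<lambda>y. dist (k y) 0 < - r/2) F" using k r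
      by (auto simp: tendsto_iff)
    show ?thesis using e1 e2
    proof eventually_elim
      case (elim y)
      then show ?case using real by (cases "G y") auto
    qed
  qed
qed

definition RQ :: "('a::euclidean_space \<Rightarrow> ereal) \<Rightarrow> 'a \<Rightarrow> 'a \<Rightarrow> 'a \<Rightarrow> ereal" where
  "RQ h x xs y = (h y - h x - ereal (inner xs (y - x))) / ereal (norm (y - x))"

lemma regular_subdiff_RQ: "regular_subdiff h x =
   (if \<bar>h x\<bar> = \<infinity> then {} else {xs. \<forall>c<0. eventually (\<lambda>y. c < RQ h x xs y) (at x)})"
  unfolding regular_subdiff_def RQ_def le_Liminf_iff by simp

lemma RQ_sum:
  assumes hx: "h x = ereal hx" and yx: "y \<noteq> x"
  shows "RQ (\<lambda>y. h y + ereal (qf a b q y)) x xs y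
       = RQ h x (xs - qg a b q x) y + ereal (q / 2 * norm (y - x))"
proof -
  have n: "norm (y - x) > 0" using yx by simp
  have id: "qf a b q y - qf a b q x - inner (qg a b q x) (y - x) = q / 2 * (norm (y - x))\<^sup>2"
    by (rule qf_ident)
  show ?thesis
  proof (cases "h y")
    case (real r)
    have "(r + qf a b q y - (hx + qf a b q x) - inner xs (y - x)) / norm (y - x)
      = (r - hx - inner (xs - qg a b q x) (y - x)) / norm (y - x) + q / 2 * norm (y - x)"
    proof -
      have e: "r + qf a b q y - (hx + qf a b q x) - inner xs (y - x)
         = (r - hx - inner (xs - qg a b q x) (y - x)) + q / 2 * (norm (y - x))\<^sup>2"
        using id by (simp add: inner_diff_left)
      have d: "(A + q / 2 * (norm (y - x))\<^sup>2) / norm (y - x) = A / norm (y - x) + q / 2 * norm (y - x)" for A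
        using n by (simp add: field_simps power2_eq_square)
      show ?thesis unfolding e d ..
    qed
    then show ?thesis unfolding RQ_def using real hx n by simp
  qed (use hx n in \<open>auto simp: RQ_def\<close>)
qed

lemma ev_transfer:
  assumes "\<forall>c<0. eventually (\<lambda>y. c < G y) F" "(k \<longlongrightarrow> 0) F"
    "eventually (\<lambda>y. H y = G y + ereal (k y)) F"
  shows "\<forall>c<0. eventually (\<lambda>y. c < (H y :: ereal)) F"
proof (intro allI impI)
  fix c :: ereal assume "c < 0"
  then have "eventually (\<lambda>y. c < G y + ereal (k y)) F" using liminf_pert[OF assms(1,2)] by blast
  with assms(3) show "eventually (\<lambda>y. c < H y) F" by eventually_elim simp
qed

lemma regular_subdiff_sum:
  "regular_subdiff (\<lambda>y. h y + ereal (qf a b q y)) x = {xs. xs - qg a b q x \<in> regular_subdiff h x}"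
proof (cases "\<bar>h x\<bar> = \<infinity>")
  case True
  then have "\<bar>h x + ereal (qf a b q x)\<bar> = \<infinity>" by (cases "h x") auto
  then show ?thesis using True by (simp add: regular_subdiff_def)
next
  case False
  then obtain hx where hx: "h x = ereal hx" by (cases "h x") auto
  have fin: "\<bar>h x + ereal (qf a b q x)\<bar> \<noteq> \<infinity>" using hx by simp
  have neq: "eventually (\<lambda>y. y \<noteq> x) (at x)" by (simp add: eventually_at_filter)
  have k: "((\<lambda>y. q / 2 * norm (y - x)) \<longlongrightarrow> 0) (at x)"
  proof -
    have "((\<lambda>y. q / 2 * norm (y - x)) \<longlongrightarrow> q / 2 * norm (x - x)) (at x)"
      by (intro tendsto_intros)
    then show ?thesis by simp
  qed
  have k': "((\<lambda>y. - (q / 2 * norm (y - x))) \<longlongrightarrow> 0) (at x)"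
    using tendsto_minus[OF k] by simp
  show ?thesis
  proof (intro set_eqI iffI)
    fix xs assume "xs \<in> regular_subdiff (\<lambda>y. h y + ereal (qf a b q y)) x"
    then have A: "\<forall>c<0. eventually (\<lambda>y. c < RQ (\<lambda>y. h y + ereal (qf a b q y)) x xs y) (at x)"
      using fin by (simp add: regular_subdiff_RQ)
    have "eventually (\<lambda>y. RQ h x (xs - qg a b q x) y
        = RQ (\<lambda>y. h y + ereal (qf a b q y)) x xs y + ereal (- (q / 2 * norm (y - x)))) (at x)"
      using neq
    proof eventually_elim
      case (elim y)
      show ?case unfolding RQ_sum[of h x hx y, OF hx elim]
        by (cases "RQ h x (xs - qg a b q x) y") auto
    qed
    from ev_transfer[OF A k' this] show "xs \<in> {xs. xs - qg a b q x \<in> regular_subdiff h x}"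
      using False by (simp add: regular_subdiff_RQ)
  next
    fix xs assume "xs \<in> {xs. xs - qg a b q x \<in> regular_subdiff h x}"
    then have A: "\<forall>c<0. eventually (\<lambda>y. c < RQ h x (xs - qg a b q x) y) (at x)"
      using False by (simp add: regular_subdiff_RQ)
    have "eventually (\<lambda>y. RQ (\<lambda>y. h y + ereal (qf a b q y)) x xs y
        = RQ h x (xs - qg a b q x) y + ereal (q / 2 * norm (y - x))) (at x)"
      using neq by eventually_elim (rule RQ_sum[of h x hx, OF hx])
    from ev_transfer[OF A k this] show "xs \<in> regular_subdiff (\<lambda>y. h y + ereal (qf a b q y)) x"
      using fin by (simp add: regular_subdiff_RQ)
  qed
qed

lemma ereal_add_cancel_real: "(a::ereal) + ereal c + ereal (- c) = a"
  by (cases a) auto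

lemma limiting_subdiff_sum:
  "limiting_subdiff (\<lambda>y. h y + ereal (qf a b q y)) x = {xs. xs - qg a b q x \<in> limiting_subdiff h x}"
proof (cases "\<bar>h x\<bar> = \<infinity>")
  case True
  then have "\<bar>h x + ereal (qf a b q x)\<bar> = \<infinity>" by (cases "h x") auto
  then show ?thesis using True by (simp add: limiting_subdiff_def)
next
  case False
  have fin: "\<bar>h x + ereal (qf a b q x)\<bar> \<noteq> \<infinity>" using False by (cases "h x") auto
  show ?thesis
  proof (intro set_eqI iffI)
    fix xs assume "xs \<in> limiting_subdiff (\<lambda>y. h y + ereal (qf a b q y)) x"
    then obtain xk xsk where xk: "xk \<longlonglongrightarrow> x" and fk: "(\<lambda>k. h (xk k) + ereal (qf a b q (xk k))) \<longlonglongrightarrow> h x + ereal (qf a b q x)"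
      and xsk: "xsk \<longlonglongrightarrow> xs" and reg: "\<forall>k. xsk k \<in> regular_subdiff (\<lambda>y. h y + ereal (qf a b q y)) (xk k)"
      using fin by (auto simp: limiting_subdiff_def)
    have "(\<lambda>k. h (xk k) + ereal (qf a b q (xk k)) + ereal (- qf a b q (xk k))) \<longlonglongrightarrow> h x + ereal (qf a b q x) + ereal (- qf a b q x)"
      by (intro tendsto_add_ereal_general1 fk) (auto intro!: tendsto_intros qf_tendsto xk)
    then have 1: "(\<lambda>k. h (xk k)) \<longlonglongrightarrow> h x" by (simp only: ereal_add_cancel_real)
    have 2: "(\<lambda>k. xsk k - qg a b q (xk k)) \<longlonglongrightarrow> xs - qg a b q x"
      by (intro tendsto_intros xsk qg_tendsto xk)
    have 3: "\<forall>k. xsk k - qg a b q (xk k) \<in> regular_subdiff h (xk k)"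
      using reg by (simp add: regular_subdiff_sum)
    show "xs \<in> {xs. xs - qg a b q x \<in> limiting_subdiff h x}"
      using xk 1 2 3 False by (auto simp: limiting_subdiff_def)
  next
    fix xs assume "xs \<in> {xs. xs - qg a b q x \<in> limiting_subdiff h x}"
    then obtain xk xsk where xk: "xk \<longlonglongrightarrow> x" and fk: "(\<lambda>k. h (xk k)) \<longlonglongrightarrow> h x"
      and xsk: "xsk \<longlonglongrightarrow> xs - qg a b q x" and reg: "\<forall>k. xsk k \<in> regular_subdiff h (xk k)"
      using False by (auto simp: limiting_subdiff_def)
    have 1: "(\<lambda>k. h (xk k) + ereal (qf a b q (xk k))) \<longlonglongrightarrow> h x + ereal (qf a b q x)"
      by (intro tendsto_add_ereal_general1 fk) (auto intro!: tendsto_intros qf_tendsto xk)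
    have 2: "(\<lambda>k. xsk k + qg a b q (xk k)) \<longlonglongrightarrow> xs - qg a b q x + qg a b q x"
      by (intro tendsto_intros xsk qg_tendsto xk)
    have 3: "\<forall>k. xsk k + qg a b q (xk k) \<in> regular_subdiff (\<lambda>y. h y + ereal (qf a b q y)) (xk k)"
      using reg by (simp add: regular_subdiff_sum)
    show "xs \<in> limiting_subdiff (\<lambda>y. h y + ereal (qf a b q y)) x"
      using xk 1 2 3 fin unfolding limiting_subdiff_def by auto
  qed
qed

lemma lsc_sum:
  assumes h: "lsc h"
  shows "lsc (\<lambda>y. h y + ereal (qf a b q y))"
  unfolding lsc_def le_Liminf_iff
proof (intro allI impI)
  fix x and y :: ereal
  assume y: "y < h x + ereal (qf a b q x)"
  have H: "\<forall>y<h x. eventually (\<lambda>z. y < h z) (at x)" using h unfolding lsc_def le_Liminf_iff by blast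
  have ct: "((\<lambda>z. qf a b q z) \<longlongrightarrow> qf a b q x) (at x)"
    by (rule qf_tendsto) (rule tendsto_ident_at)
  show "eventually (\<lambda>z. y < h z + ereal (qf a b q z)) (at x)"
  proof (cases y)
    case MInf
    then have "-\<infinity> < h x" using y by (cases "h x") auto
    then have "eventually (\<lambda>z. -\<infinity> < h z) (at x)" using H by blast
    then show ?thesis by eventually_elim (use MInf in \<open>auto\<close>)
  next
    case PInf then show ?thesis using y by simp
  next
    case (real yr)
    have "ereal (yr - qf a b q x) < h x" using y real by (cases "h x") auto
    then obtain w where w1: "ereal (yr - qf a b q x) < ereal w" and w2: "ereal w < h x"
      using ereal_dense2 by blast
    have e1: "eventually (\<lambda>z. ereal w < h z) (at x)" using H w2 by blast
    have e2: "eventually (\<lambda>z. dist (qf a b q z) (qf a b q x) < w - (yr - qf a b q x)) (at x)"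
      using ct w1 by (auto simp: tendsto_iff)
    show ?thesis using e1 e2
    proof eventually_elim
      case (elim z)
      then show ?case using real by (cases "h z") (auto simp: dist_real_def)
    qed
  qed
qed

lemma convex_affine_add:
  assumes cv: "ereal_convex_on U F" and nm: "\<forall>x. F x \<noteq> -\<infinity>"
    and A: "\<And>x y (l::real). A (l *\<^sub>R x + (1 - l) *\<^sub>R y) = l * A x + (1 - l) * A y"
  shows "ereal_convex_on U (\<lambda>x. F x + ereal (A x))"
  unfolding ereal_convex_on_def
proof (intro ballI allI impI)
  fix x y and l :: real assume x: "x \<in> U" and y: "y \<in> U" and l: "0 \<le> l \<and> l \<le> 1"
  have 1: "F (l *\<^sub>R x + (1 - l) *\<^sub>R y) \<le> ereal l * F x + ereal (1 - l) * F y"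
    using cv x y l unfolding ereal_convex_on_def by blast
  have "F (l *\<^sub>R x + (1 - l) *\<^sub>R y) + ereal (A (l *\<^sub>R x + (1 - l) *\<^sub>R y))
      \<le> ereal l * F x + ereal (1 - l) * F y + ereal (l * A x + (1 - l) * A y)"
    unfolding A using 1 by (rule add_right_mono)
  also have "\<dots> = ereal l * (F x + ereal (A x)) + ereal (1 - l) * (F y + ereal (A y))"
    using nm[rule_format, of x] nm[rule_format, of y] l
    by (cases "F x"; cases "F y"; cases "l = 0"; cases "l = 1") (auto simp: algebra_simps)
  finally show "F (l *\<^sub>R x + (1 - l) *\<^sub>R y) + ereal (A (l *\<^sub>R x + (1 - l) *\<^sub>R y))
      \<le> ereal l * (F x + ereal (A x)) + ereal (1 - l) * (F y + ereal (A y))" .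
qed

lemma qf_minus_sq: "qf a b q x - q / 2 * (norm x)\<^sup>2 = inner a x - inner a b - q * inner b x + q / 2 * (norm b)\<^sup>2"
  unfolding qf_def norm_diff_sq by (simp add: inner_diff_right algebra_simps)

lemma qf_affine: "qf a b q (l *\<^sub>R x + (1 - l) *\<^sub>R y) - q / 2 * (norm (l *\<^sub>R x + (1 - l) *\<^sub>R y))\<^sup>2
   = l * (qf a b q x - q / 2 * (norm x)\<^sup>2) + (1 - l) * (qf a b q y - q / 2 * (norm y)\<^sup>2)"
  unfolding qf_minus_sq by (simp add: inner_add_right algebra_simps) (simp add: field_simps)

lemma convex_subgrad:
  assumes cv: "ereal_convex_on U H" and nm: "\<forall>x. H x \<noteq> -\<infinity>"
    and x: "x \<in> U" and z: "z \<in> U" and w: "w \<in> regular_subdiff H x"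
  shows "H x + ereal (inner w (z - x)) \<le> H z"
proof (rule ccontr)
  assume neg: "\<not> ?thesis"
  have fin: "\<bar>H x\<bar> \<noteq> \<infinity>" using w by (auto simp: regular_subdiff_def split: if_splits)
  then obtain Hx where Hx: "H x = ereal Hx" by (cases "H x") auto
  have A: "\<forall>c<0. eventually (\<lambda>y. c < RQ H x w y) (at x)"
    using w fin by (simp add: regular_subdiff_RQ)
  have lt: "H z < ereal (Hx + inner w (z - x))" using neg Hx by simp
  then obtain Hz where Hz: "H z = ereal Hz" using nm[rule_format, of z] by (cases "H z") auto
  have zx: "z \<noteq> x" using neg by auto
  define n where "n = norm (z - x)"
  have n: "n > 0" using zx by (simp add: n_def)
  define c where "c = (Hx + inner w (z - x) - Hz) / n"
  have c: "c > 0" using lt Hz n by (simp add: c_def)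
  have cn: "c * n = Hx + inner w (z - x) - Hz" using n by (simp add: c_def)
  have "eventually (\<lambda>y. ereal (- c) < RQ H x w y) (at x)" using A c by simp
  then obtain d where d: "d > 0" and dP: "\<And>y. y \<noteq> x \<Longrightarrow> dist y x < d \<Longrightarrow> ereal (- c) < RQ H x w y"
    unfolding eventually_at by auto
  define l where "l = min 1 (d / (2 * n))"
  have l0: "l > 0" using d n by (simp add: l_def)
  have l1: "l \<le> 1" by (simp add: l_def)
  have ln: "l * n < d"
  proof -
    have "l * n \<le> d / (2 * n) * n" using n by (intro mult_right_mono) (auto simp: l_def)
    also have "\<dots> = d / 2" using n by simp
    finally show ?thesis using d by simp
  qed
  define y where "y = l *\<^sub>R z + (1 - l) *\<^sub>R x"
  have yx: "y - x = l *\<^sub>R (z - x)" by (simp add: y_def algebra_simps)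
  have ny: "norm (y - x) = l * n" using l0 by (simp add: yx n_def)
  have y_ne: "y \<noteq> x" using ny l0 n by auto
  have dy: "dist y x < d" using ny ln by (simp add: dist_norm)
  have "H y \<le> ereal l * H z + ereal (1 - l) * H x"
    using cv z x l0 l1 unfolding ereal_convex_on_def y_def by auto
  then have Hy_le: "H y \<le> ereal (l * Hz + (1 - l) * Hx)" using Hz Hx by simp
  then obtain Hy where Hy: "H y = ereal Hy" using nm[rule_format, of y] by (cases "H y") auto
  have Hy_le': "Hy \<le> l * Hz + (1 - l) * Hx" using Hy_le Hy by simp
  have "RQ H x w y = ereal ((Hy - Hx - l * inner w (z - x)) / (l * n))"
    unfolding RQ_def using Hy Hx ny yx l0 n by simp
  moreover have "(Hy - Hx - l * inner w (z - x)) / (l * n) \<le> - c"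
  proof -
    have e1: "c * (l * n) = l * (c * n)" by simp
    have e2: "l * (c * n) = l * Hx + l * inner w (z - x) - l * Hz" unfolding cn by (simp add: algebra_simps)
    have e3: "Hy \<le> l * Hz + Hx - l * Hx" using Hy_le' by (simp add: algebra_simps)
    have "Hy - Hx - l * inner w (z - x) \<le> - c * (l * n)"
      unfolding minus_mult_left[symmetric] e1 e2 using e3 by linarith
    then show ?thesis using l0 n by (simp add: pos_divide_le_eq)
  qed
  ultimately have "RQ H x w y \<le> ereal (- c)" by simp
  with dP[OF y_ne dy] show False by simp
qed

lemma H_as_sum: "(\<lambda>y. fh y - ereal (s / 2 * (norm y)\<^sup>2)) = (\<lambda>y. fh y + ereal (qf 0 0 (- s) y))"
proof
  fix y show "fh y - ereal (s / 2 * (norm y)\<^sup>2) = fh y + ereal (qf 0 0 (- s) y)"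
    by (cases "fh y") (auto simp: qf_def)
qed

lemma quad_subgrad_reg:
  assumes cv: "ereal_convex_on U (\<lambda>x. fh x - ereal (s / 2 * (norm x)\<^sup>2))"
    and nm: "\<forall>x. fh x \<noteq> -\<infinity>" and x: "x \<in> U" and z: "z \<in> U"
    and v: "v \<in> regular_subdiff fh x"
  shows "fh x + ereal (inner v (z - x) + s / 2 * (norm (z - x))\<^sup>2) \<le> fh z"
proof -
  let ?H = "\<lambda>y. fh y - ereal (s / 2 * (norm y)\<^sup>2)"
  have nmH: "\<forall>y. ?H y \<noteq> -\<infinity>" 
  proof
    fix y show "?H y \<noteq> -\<infinity>" using nm[rule_format, of y] by (cases "fh y") auto
  qed
  have "v - s *\<^sub>R x \<in> regular_subdiff ?H x"
    unfolding H_as_sum regular_subdiff_sum using v by (simp add: qg_def)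
  from convex_subgrad[OF cv nmH x z this]
  have I: "?H x + ereal (inner (v - s *\<^sub>R x) (z - x)) \<le> ?H z" .
  have fin: "\<bar>fh x\<bar> \<noteq> \<infinity>" using v by (auto simp: regular_subdiff_def split: if_splits)
  then obtain fx where fx: "fh x = ereal fx" by (cases "fh x") auto
  show ?thesis
  proof (cases "fh z")
    case (real fz)
    have "fx - s / 2 * (norm x)\<^sup>2 + inner (v - s *\<^sub>R x) (z - x) \<le> fz - s / 2 * (norm z)\<^sup>2"
      using I fx real by simp
    moreover have "(norm (z - x))\<^sup>2 = (norm z)\<^sup>2 - 2 * inner x z + (norm x)\<^sup>2" by (rule norm_diff_sq)
    ultimately show ?thesis using fx real
      by (simp add: inner_diff_left inner_diff_right algebra_simps power2_norm_eq_inner inner_commute)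
  qed (use nm in auto)
qed

lemma quad_subgrad_lim:
  assumes cv: "ereal_convex_on U (\<lambda>x. fh x - ereal (s / 2 * (norm x)\<^sup>2))"
    and nm: "\<forall>x. fh x \<noteq> -\<infinity>" and U: "open U" and x: "x \<in> U" and z: "z \<in> U"
    and v: "v \<in> limiting_subdiff fh x"
  shows "fh x + ereal (inner v (z - x) + s / 2 * (norm (z - x))\<^sup>2) \<le> fh z"
proof -
  have fin: "\<bar>fh x\<bar> \<noteq> \<infinity>" using v by (auto simp: limiting_subdiff_def split: if_splits)
  obtain xk vk where xk: "xk \<longlonglongrightarrow> x" and fk: "(\<lambda>k. fh (xk k)) \<longlonglongrightarrow> fh x"
    and vk: "vk \<longlonglongrightarrow> v" and reg: "\<forall>k. vk k \<in> regular_subdiff fh (xk k)"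
    using v fin by (auto simp: limiting_subdiff_def)
  have evU: "eventually (\<lambda>k. xk k \<in> U) sequentially" using topological_tendstoD[OF xk U x] .
  have ev: "eventually (\<lambda>k. fh (xk k) + ereal (inner (vk k) (z - xk k) + s / 2 * (norm (z - xk k))\<^sup>2) \<le> fh z) sequentially"
    using evU by eventually_elim (rule quad_subgrad_reg[OF cv nm _ z], auto simp: reg)
  have lim: "(\<lambda>k. fh (xk k) + ereal (inner (vk k) (z - xk k) + s / 2 * (norm (z - xk k))\<^sup>2))
      \<longlonglongrightarrow> fh x + ereal (inner v (z - x) + s / 2 * (norm (z - x))\<^sup>2)"
    by (intro tendsto_add_ereal_general1 fk) (auto intro!: tendsto_intros xk vk)
  show ?thesis by (rule tendsto_le[OF _ tendsto_const lim ev]) simp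
qed

lemma ereal_convex_on_subset: "ereal_convex_on U F \<Longrightarrow> W \<subseteq> U \<Longrightarrow> ereal_convex_on W F"
  unfolding ereal_convex_on_def by blast

lemma main_cert:
  fixes f fh :: "'a::euclidean_space \<Rightarrow> ereal"
  assumes cert: "certifies_var_convex s f xb xbs fh U V \<rho>"
    and xbs: "xbs \<in> limiting_subdiff f xb"
    and fp: "\<forall>x. f x \<noteq> -\<infinity>"
  shows "\<exists>Uh Vh \<rho>h. certifies_var_convex (s + t) (\<lambda>x. f x + ereal (qf ys xb t x)) xb (xbs + ys)
            (\<lambda>x. fh x + ereal (qf ys xb t x)) Uh Vh \<rho>h \<and> ereal \<rho>h > f xb"
proof -
  have oU: "open U" and cU: "convex U" and oV: "open V" and cV: "convex V" and xbU: "xb \<in> U"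
    and xbsV: "xbs \<in> V" and lfh: "lsc fh" and fhnm: "\<forall>x. fh x \<noteq> -\<infinity>"
    and cv: "ereal_convex_on U (\<lambda>x. fh x - ereal (s / 2 * (norm x)\<^sup>2))"
    and fhle: "\<forall>x\<in>U. fh x \<le> f x" and rho: "ereal \<rho> > f xb"
    and gph: "gph_rho_subdiff f \<rho> \<inter> (U \<times> V) = gph_subdiff fh \<inter> (U \<times> V)"
    and veq: "\<forall>(x, xs) \<in> gph_rho_subdiff f \<rho> \<inter> (U \<times> V). f x = fh x"
    using cert unfolding certifies_var_convex_def by auto
  have gph': "\<And>x v. x \<in> U \<Longrightarrow> v \<in> V \<Longrightarrow>
      (v \<in> limiting_subdiff f x \<and> f x < ereal \<rho>) = (v \<in> limiting_subdiff fh x)"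
    using gph unfolding gph_rho_subdiff_def gph_subdiff_def by blast
  have veq': "\<And>x v. x \<in> U \<Longrightarrow> v \<in> V \<Longrightarrow> v \<in> limiting_subdiff f x \<Longrightarrow> f x < ereal \<rho> \<Longrightarrow> f x = fh x"
    using veq unfolding gph_rho_subdiff_def by blast
  obtain fb where fb: "f xb = ereal fb" using rho fp[rule_format, of xb] by (cases "f xb") auto
  have fhxb: "fh xb = ereal fb" using veq'[OF xbU xbsV xbs] rho fb by simp
  obtain e where e: "e > 0" and eV: "ball xbs e \<subseteq> V" using oV xbsV open_contains_ball by blast
  obtain r0 where r0: "r0 > 0" and r0U: "ball xb r0 \<subseteq> U" using oU xbU open_contains_ball by blast
  define gap where "gap = \<rho> - fb"
  have gap: "gap > 0" using rho fb by (simp add: gap_def)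
  define M where "M = norm ys + \<bar>t\<bar> + norm xbs + e + \<bar>s\<bar> + 1"
  have M: "M > 0" using e norm_ge_zero[of ys] norm_ge_zero[of xbs] abs_ge_zero[of t] abs_ge_zero[of s] unfolding M_def by linarith
  define r where "r = min (min 1 r0) (min (e / (2 * (\<bar>t\<bar> + 1))) (gap / (8 * M)))"
  have r: "r > 0" using r0 e gap M by (simp add: r_def)
  have r1: "r \<le> 1" and rr0: "r \<le> r0" by (auto simp: r_def)
  have rt: "\<bar>t\<bar> * r < e / 2"
  proof -
    have "r \<le> e / (2 * (\<bar>t\<bar> + 1))" by (simp add: r_def)
    then have "(\<bar>t\<bar> + 1) * r \<le> e / 2" by (simp add: field_simps)
    then show ?thesis using r by (simp add: algebra_simps)
  qed
  have rM: "r * M < gap / 4"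
  proof -
    have "r \<le> gap / (8 * M)" by (simp add: r_def)
    then have "r * M \<le> gap / 8" using M by (simp add: field_simps)
    then show ?thesis using gap by simp
  qed
  define Uh where "Uh = ball xb r"
  define Vh where "Vh = ball (xbs + ys) (e / 2)"
  define \<rho>h where "\<rho>h = fb + gap / 2"
  have UhU: "Uh \<subseteq> U" using r0U rr0 by (auto simp: Uh_def)
  let ?psi = "\<lambda>x. f x + ereal (qf ys xb t x)"
  let ?psih = "\<lambda>x. fh x + ereal (qf ys xb t x)"
  have dist_bd: "\<And>x. x \<in> Uh \<Longrightarrow> norm (x - xb) < r" by (simp add: Uh_def dist_norm norm_minus_commute)
  have qfb: "\<And>x. x \<in> Uh \<Longrightarrow> \<bar>qf ys xb t x\<bar> < gap / 4"
  proof -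
    fix x assume x: "x \<in> Uh"
    define d where "d = norm (x - xb)"
    have d: "d < r" "0 \<le> d" using dist_bd[OF x] by (auto simp: d_def)
    have d2: "d\<^sup>2 \<le> d" using mult_left_mono[of d 1 d] d r1 by (simp add: power2_eq_square)
    have "\<bar>qf ys xb t x\<bar> \<le> \<bar>inner ys (x - xb)\<bar> + \<bar>t / 2 * d\<^sup>2\<bar>"
      unfolding qf_def d_def by (rule abs_triangle_ineq)
    also have "\<dots> \<le> norm ys * d + \<bar>t\<bar> * d"
    proof (rule add_mono)
      show "\<bar>inner ys (x - xb)\<bar> \<le> norm ys * d" unfolding d_def by (rule Cauchy_Schwarz_ineq2)
      have "\<bar>t / 2 * d\<^sup>2\<bar> = \<bar>t\<bar> / 2 * d\<^sup>2" by (simp add: abs_mult)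
      also have "\<dots> \<le> \<bar>t\<bar> / 2 * d" using d2 by (intro mult_left_mono) auto
      also have "\<dots> \<le> \<bar>t\<bar> * d" using d by (simp add: mult_right_mono)
      finally show "\<bar>t / 2 * d\<^sup>2\<bar> \<le> \<bar>t\<bar> * d" .
    qed
    also have "\<dots> = d * (norm ys + \<bar>t\<bar>)" by (simp add: algebra_simps)
    also have "\<dots> \<le> r * M"
    proof (rule mult_mono)
      show "norm ys + \<bar>t\<bar> \<le> M" using e norm_ge_zero[of xbs] unfolding M_def by linarith
    qed (use d in auto)
    finally show "\<bar>qf ys xb t x\<bar> < gap / 4" using rM by simp
  qed
  have vV: "\<And>x xs. x \<in> Uh \<Longrightarrow> xs \<in> Vh \<Longrightarrow> xs - qg ys xb t x \<in> ball xbs e"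
  proof -
    fix x xs assume x: "x \<in> Uh" and xs: "xs \<in> Vh"
    have "dist xbs (xs - qg ys xb t x) = norm ((xbs + ys - xs) + t *\<^sub>R (x - xb))"
      by (simp add: qg_def dist_norm algebra_simps)
    also have "\<dots> \<le> norm (xbs + ys - xs) + \<bar>t\<bar> * norm (x - xb)"
      by (metis norm_scaleR norm_triangle_ineq)
    also have "\<dots> < e / 2 + e / 2"
    proof (rule add_less_le_mono)
      show "norm (xbs + ys - xs) < e / 2" using xs by (simp add: Vh_def dist_norm)
      have "\<bar>t\<bar> * norm (x - xb) \<le> \<bar>t\<bar> * r" using dist_bd[OF x] by (intro mult_left_mono) auto
      then show "\<bar>t\<bar> * norm (x - xb) \<le> e / 2" using rt by simp
    qed
    finally show "xs - qg ys xb t x \<in> ball xbs e" by simp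
  qed
  have fhbd: "\<And>x v. x \<in> Uh \<Longrightarrow> v \<in> ball xbs e \<Longrightarrow> v \<in> limiting_subdiff fh x \<Longrightarrow> fh x < ereal (fb + gap / 4)"
  proof -
    fix x v assume x: "x \<in> Uh" and v: "v \<in> ball xbs e" and vl: "v \<in> limiting_subdiff fh x"
    have xU: "x \<in> U" using x UhU by auto
    have I: "fh x + ereal (inner v (xb - x) + s / 2 * (norm (xb - x))\<^sup>2) \<le> ereal fb"
      using quad_subgrad_lim[OF cv fhnm oU xU xbU vl] fhxb by simp
    obtain hx where hx: "fh x = ereal hx" using I fhnm[rule_format, of x] by (cases "fh x") auto
    define d where "d = norm (x - xb)"
    have d: "d < r" "0 \<le> d" using dist_bd[OF x] by (auto simp: d_def)
    have d2: "d\<^sup>2 \<le> d" using mult_left_mono[of d 1 d] d r1 by (simp add: power2_eq_square)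
    have nv: "norm v \<le> norm xbs + e" using v norm_triangle_ineq2[of v xbs]
      by (simp add: dist_norm norm_minus_commute)
    have I': "hx \<le> fb - inner v (xb - x) - s / 2 * d\<^sup>2" using I hx by (simp add: d_def norm_minus_commute)
    have a1: "- inner v (xb - x) \<le> (norm xbs + e) * d"
    proof -
      have "- inner v (xb - x) \<le> norm v * norm (xb - x)"
        using Cauchy_Schwarz_ineq2[of v "xb - x"] by linarith
      also have "\<dots> \<le> (norm xbs + e) * d" using nv by (simp add: d_def norm_minus_commute mult_right_mono)
      finally show ?thesis .
    qed
    have a2: "- (s / 2 * d\<^sup>2) \<le> \<bar>s\<bar> * d"
    proof -
      have "- (s / 2 * d\<^sup>2) = (- (s / 2)) * d\<^sup>2" by simp
      also have "\<dots> \<le> \<bar>s\<bar> / 2 * d\<^sup>2" by (intro mult_right_mono) auto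
      also have "\<dots> \<le> \<bar>s\<bar> / 2 * d" using d2 by (intro mult_left_mono) auto
      also have "\<dots> \<le> \<bar>s\<bar> * d" using d by (simp add: mult_right_mono)
      finally show ?thesis .
    qed
    have "hx \<le> fb + d * (norm xbs + e + \<bar>s\<bar>)" using I' a1 a2 by (simp add: algebra_simps)
    also have "d * (norm xbs + e + \<bar>s\<bar>) \<le> r * M"
    proof (rule mult_mono)
      show "norm xbs + e + \<bar>s\<bar> \<le> M" using norm_ge_zero[of ys] unfolding M_def by linarith
      show "0 \<le> norm xbs + e + \<bar>s\<bar>" using e norm_ge_zero[of xbs] by linarith
    qed (use d in auto)
    finally show "fh x < ereal (fb + gap / 4)" using hx rM by simp
  qed
  have key: "\<And>x xs. x \<in> Uh \<Longrightarrow> xs \<in> Vh \<Longrightarrow>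
      ((xs \<in> limiting_subdiff ?psi x \<and> ?psi x < ereal \<rho>h) \<longleftrightarrow> xs \<in> limiting_subdiff ?psih x) \<and>
      (xs \<in> limiting_subdiff ?psi x \<and> ?psi x < ereal \<rho>h \<longrightarrow> ?psi x = ?psih x)"
  proof -
    fix x xs assume x: "x \<in> Uh" and xs: "xs \<in> Vh"
    define v where "v = xs - qg ys xb t x"
    have vb: "v \<in> ball xbs e" using vV[OF x xs] by (simp add: v_def)
    have vVV: "v \<in> V" using vb eV by auto
    have xU: "x \<in> U" using x UhU by auto
    have q: "\<bar>qf ys xb t x\<bar> < gap / 4" using qfb[OF x] .
    have L1: "xs \<in> limiting_subdiff ?psi x \<longleftrightarrow> v \<in> limiting_subdiff f x"
      by (simp add: limiting_subdiff_sum v_def)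
    have L2: "xs \<in> limiting_subdiff ?psih x \<longleftrightarrow> v \<in> limiting_subdiff fh x"
      by (simp add: limiting_subdiff_sum v_def)
    have fwd: "v \<in> limiting_subdiff f x \<and> f x < ereal \<rho>" if h1: "v \<in> limiting_subdiff f x" and h2: "?psi x < ereal \<rho>h"
    proof -
      obtain fx where fx: "f x = ereal fx" using h2 fp[rule_format, of x] by (cases "f x") auto
      have "fx + qf ys xb t x < fb + gap / 2" using h2 fx by (simp add: \<rho>h_def)
      then have "fx < \<rho>" using q gap unfolding gap_def abs_less_iff by (elim conjE) (simp add: field_simps)
      then show ?thesis using h1 fx by simp
    qed
    have P1: "xs \<in> limiting_subdiff ?psih x" if A: "xs \<in> limiting_subdiff ?psi x \<and> ?psi x < ereal \<rho>h"
      using A fwd gph'[OF xU vVV] L1 L2 by blast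
    have P2: "?psi x = ?psih x" if A: "xs \<in> limiting_subdiff ?psi x \<and> ?psi x < ereal \<rho>h"
    proof -
      have "f x = fh x" using A fwd veq'[OF xU vVV] L1 by blast
      then show ?thesis by simp
    qed
    have P3: "xs \<in> limiting_subdiff ?psi x \<and> ?psi x < ereal \<rho>h" if B: "xs \<in> limiting_subdiff ?psih x"
    proof -
      have vh: "v \<in> limiting_subdiff fh x" using B L2 by simp
      then have fv: "v \<in> limiting_subdiff f x" and fr: "f x < ereal \<rho>" using gph'[OF xU vVV] by auto
      have eq: "f x = fh x" using veq'[OF xU vVV fv fr] .
      have hb: "fh x < ereal (fb + gap / 4)" using fhbd[OF x vb vh] .
      obtain hx where hx: "fh x = ereal hx" using hb fhnm[rule_format, of x] by (cases "fh x") auto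
      have "hx < fb + gap / 4" using hb hx by simp
      then have "hx + qf ys xb t x < fb + gap / 2" using q unfolding abs_less_iff by (elim conjE) (simp add: field_simps)
      then have "?psi x < ereal \<rho>h" using eq hx by (simp add: \<rho>h_def)
      then show ?thesis using fv L1 by simp
    qed
    show "?thesis x xs" using P1 P2 P3 by blast
  qed
  have conv: "ereal_convex_on Uh (\<lambda>x. fh x + ereal (qf ys xb t x) - ereal ((s + t) / 2 * (norm x)\<^sup>2))"
  proof -
    have nmH: "\<forall>y. fh y - ereal (s / 2 * (norm y)\<^sup>2) \<noteq> -\<infinity>"
    proof
      fix y show "fh y - ereal (s / 2 * (norm y)\<^sup>2) \<noteq> -\<infinity>" using fhnm[rule_format, of y] by (cases "fh y") auto
    qed
    have "ereal_convex_on U (\<lambda>x. (fh x - ereal (s / 2 * (norm x)\<^sup>2)) + ereal (qf ys xb t x - t / 2 * (norm x)\<^sup>2))"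
      by (rule convex_affine_add[OF cv nmH]) (rule qf_affine)
    moreover have "(\<lambda>x. (fh x - ereal (s / 2 * (norm x)\<^sup>2)) + ereal (qf ys xb t x - t / 2 * (norm x)\<^sup>2))
        = (\<lambda>x. fh x + ereal (qf ys xb t x) - ereal ((s + t) / 2 * (norm x)\<^sup>2))"
    proof
      fix x show "(fh x - ereal (s / 2 * (norm x)\<^sup>2)) + ereal (qf ys xb t x - t / 2 * (norm x)\<^sup>2)
        = fh x + ereal (qf ys xb t x) - ereal ((s + t) / 2 * (norm x)\<^sup>2)"
        by (cases "fh x") (auto simp: algebra_simps add_divide_distrib)
    qed
    ultimately show ?thesis using ereal_convex_on_subset UhU by metis
  qed
  have c: "certifies_var_convex (s + t) ?psi xb (xbs + ys) ?psih Uh Vh \<rho>h"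
    unfolding certifies_var_convex_def
  proof (intro conjI)
    show "open Uh" "convex Uh" "open Vh" "convex Vh" by (auto simp: Uh_def Vh_def)
    show "xb \<in> Uh" "xbs + ys \<in> Vh" using r e by (auto simp: Uh_def Vh_def)
    show "lsc ?psih" by (rule lsc_sum[OF lfh])
    show "\<forall>x. ?psih x \<noteq> -\<infinity>" using fhnm by auto
    show "ereal_convex_on Uh (\<lambda>x. ?psih x - ereal ((s + t) / 2 * (norm x)\<^sup>2))" using conv by simp
    show "\<forall>x\<in>Uh. ?psih x \<le> ?psi x" using fhle UhU by (auto intro: add_right_mono)
    show "?psi xb < ereal \<rho>h" using fb gap by (simp add: qf_def \<rho>h_def)
    show "gph_rho_subdiff ?psi \<rho>h \<inter> (Uh \<times> Vh) = gph_subdiff ?psih \<inter> (Uh \<times> Vh)"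
      using key unfolding gph_rho_subdiff_def gph_subdiff_def by blast
    show "\<forall>(x, xs)\<in>gph_rho_subdiff ?psi \<rho>h \<inter> (Uh \<times> Vh). ?psi x = ?psih x"
      using key unfolding gph_rho_subdiff_def by blast
  qed
  moreover have "ereal \<rho>h > f xb" using fb gap by (simp add: \<rho>h_def)
  ultimately show ?thesis by blast
qed


theorem lemma4p2:
  fixes s :: real and f :: "'a::euclidean_space \<Rightarrow> ereal" and xb xbs :: 'a
  assumes f_proper: "\<forall>x. f x \<noteq> -\<infinity>"
    and f_lsc: "lsc f"
    and xb_dom: "xb \<in> dom_fn f"
    and vc: "var_convex s f xb xbs"
  shows "(\<forall>(t::real) (ys::'a).
            var_convex (s + t)
              (\<lambda>x. f x + ereal (inner ys (x - xb) + t / 2 * (norm (x - xb))\<^sup>2)) xb (xbs + ys))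
       \<and> (\<forall>fh U V \<rho>. certifies_var_convex s f xb xbs fh U V \<rho> \<longrightarrow>
            (\<forall>(t::real) (ys::'a). \<exists>Uh Vh \<rho>h.
               certifies_var_convex (s + t)
                 (\<lambda>x. f x + ereal (inner ys (x - xb) + t / 2 * (norm (x - xb))\<^sup>2)) xb (xbs + ys)
                 (\<lambda>x. fh x + ereal (inner ys (x - xb) + t / 2 * (norm (x - xb))\<^sup>2)) Uh Vh \<rho>h
               \<and> ereal \<rho>h > f xb))"
  proof -
  have xbs: "xbs \<in> limiting_subdiff f xb" using vc unfolding var_convex_def by blast
  obtain fh0 U0 V0 \<rho>0 where c0: "certifies_var_convex s f xb xbs fh0 U0 V0 \<rho>0"
    using vc unfolding var_convex_def by blast
  have P2: "\<forall>fh U V \<rho>. certifies_var_convex s f xb xbs fh U V \<rho> \<longrightarrow>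
            (\<forall>(t::real) (ys::'a). \<exists>Uh Vh \<rho>h.
               certifies_var_convex (s + t)
                 (\<lambda>x. f x + ereal (inner ys (x - xb) + t / 2 * (norm (x - xb))\<^sup>2)) xb (xbs + ys)
                 (\<lambda>x. fh x + ereal (inner ys (x - xb) + t / 2 * (norm (x - xb))\<^sup>2)) Uh Vh \<rho>h
               \<and> ereal \<rho>h > f xb)"
    using main_cert[OF _ xbs f_proper, unfolded qf_def] by blast
  have P1: "var_convex (s + t) (\<lambda>x. f x + ereal (inner ys (x - xb) + t / 2 * (norm (x - xb))\<^sup>2)) xb (xbs + ys)"
    for t ys
  proof -
    have "lsc (\<lambda>x. f x + ereal (qf ys xb t x))" by (rule lsc_sum[OF f_lsc])
    moreover have "xb \<in> dom_fn (\<lambda>x. f x + ereal (qf ys xb t x))"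
      using xb_dom by (cases "f xb") (auto simp: dom_fn_def qf_def)
    moreover have "xbs + ys \<in> limiting_subdiff (\<lambda>x. f x + ereal (qf ys xb t x)) xb"
      using xbs by (simp add: limiting_subdiff_sum qg_def)
    moreover have "\<exists>fh U V \<rho>. certifies_var_convex (s + t) (\<lambda>x. f x + ereal (qf ys xb t x)) xb (xbs + ys) fh U V \<rho>"
      using main_cert[OF c0 xbs f_proper, of t ys] by blast
    ultimately show ?thesis unfolding var_convex_def qf_def by blast
  qed
  show ?thesis using P1 P2 by blast
qed

end
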